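(* Let $r\ge1$, $a,b,q$ be nonnegative integers and $p$ a real number with $0\le p\le b$, $0\le q\le a$, $a-q=r(b-p)$, and $a$ and $b$ not both zero. Let $P\subset\mathbb{R}^2$ be the closed (possibly degenerate) pentagon with vertices $(0,0),(0,a),(p,a),(b,q),(b,0)$. Call a sequence $(c_1,\dots,c_a)$ of nonnegative integers a parking function in $P$ if its nondecreasing rearrangement $s_1\le s_2\le\cdots\le s_a$ is the left-area sequence of some lattice path from $(0,a)$ to $(b,0)$ with unit steps $(0,-1)$ and $(1,0)$ contained in $P$, where the left-area sequence of such a path is $(s_1,\dots,s_a)$ with $s_i$ the $x$-coordinate of the down step going from height $a-i+1$ to height $a-i$. Define $G(a,b,p,r,q)$ recursively by $$G(a,b,p,r,q)=\begin{cases}(b+1)^a & \text{if } p=b \ (\text{equivalently } q=a,\ P\text{ a rectangle or segment}),\\[4pt] \displaystyle\sum_{w=0}^{q} b^{a-q+w}\binom{a}{q-w} & \text{else if } a-q\le r,\\[4pt] \displaystyle\sum_{w=0}^{q}(\lfloor p\rfloor+1)^{a-w}(b-\lfloor p\rfloor)^{w}\binom{a}{w}+\sum_{t=q+1}^{q+(b-\lfloor p\rfloor-1)r}(\lfloor p\rfloor+1)^{a-t}\binom{a}{t}\,G(\xi_t) & \text{otherwise,}\end{cases}$$ where $\xi_t=\big(t,\ b-\lfloor p\rfloor-1,\ b-\lfloor p\rfloor-\tfrac{t-q}{r}-1,\ r,\ q\big)$. Then the number of parking functions in $P$ equals $G(a,b,p,r,q)$.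
   Context: The pentagon $P$ has a slanted side from $(p,a)$ to $(b,q)$ along which the height drops by $r$ for each unit of horizontal displacement; $\lfloor p\rfloor$ denotes the integer part of $p$. *)

theory Defs
  imports "HOL-Analysis.Analysis"
begin

definition pentagon :: "nat \<Rightarrow> nat \<Rightarrow> real \<Rightarrow> nat \<Rightarrow> (real \<times> real) set" where
  "pentagon a b p q = convex hull {(0,0), (0, real a), (p, real a), (real b, real q), (real b, 0)}"

text \<open>A lattice path starting at (0,a) is encoded by its list of unit steps:
  True = down step (0,-1), False = right step (1,0).
  The k-th vertex of the path:\<close>
definition path_pt :: "nat \<Rightarrow> bool list \<Rightarrow> nat \<Rightarrow> real \<times> real" where
  "path_pt a st k = (real (length (filter Not (take k st))),
                     real a - real (length (filter id (take k st))))"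

definition lattice_path_in :: "nat \<Rightarrow> nat \<Rightarrow> (real \<times> real) set \<Rightarrow> bool list \<Rightarrow> bool" where
  "lattice_path_in a b S st \<longleftrightarrow>
     length (filter id st) = a \<and> length (filter Not st) = b \<and>
     (\<forall>k < length st. closed_segment (path_pt a st k) (path_pt a st (Suc k)) \<subseteq> S)"

fun left_area_aux :: "nat \<Rightarrow> bool list \<Rightarrow> nat list" where
  "left_area_aux x [] = []"
| "left_area_aux x (True # st) = x # left_area_aux x st"
| "left_area_aux x (False # st) = left_area_aux (Suc x) st"

definition left_area :: "bool list \<Rightarrow> nat list" where
  "left_area st = left_area_aux 0 st"

definition parking_fn :: "nat \<Rightarrow> nat \<Rightarrow> real \<Rightarrow> nat \<Rightarrow> nat list \<Rightarrow> bool" where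
  "parking_fn a b p q c \<longleftrightarrow> length c = a \<and>
     (\<exists>st. lattice_path_in a b (pentagon a b p q) st \<and> sort c = left_area st)"

text \<open>The guard "0 < b" in front of the
  recursive call is always true when the third case is reached under the hypotheses of the
  theorem (b = 0 forces p = b); it is only there to make the recursion total.\<close>
function G :: "nat \<Rightarrow> nat \<Rightarrow> real \<Rightarrow> nat \<Rightarrow> nat \<Rightarrow> nat" where
  "G a b p r q =
    (if p = real b then (b + 1) ^ a
     else if a - q \<le> r then (\<Sum>w = 0..q. b ^ (a - q + w) * (a choose (q - w)))
     else (\<Sum>w = 0..q. (nat \<lfloor>p\<rfloor> + 1) ^ (a - w) * (b - nat \<lfloor>p\<rfloor>) ^ w * (a choose w))
        + (\<Sum>t = q + 1..q + (b - nat \<lfloor>p\<rfloor> - 1) * r.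
             (nat \<lfloor>p\<rfloor> + 1) ^ (a - t) * (a choose t) *
             (if 0 < b then
                G t (b - nat \<lfloor>p\<rfloor> - 1)
                  (real (b - nat \<lfloor>p\<rfloor>) - (real t - real q) / real r - 1) r q
              else 0)))"
  by pat_completeness auto
termination
  by (relation "Wellfounded.measure (\<lambda>(a, b, p, r, q). b)") auto

end

theory Submission
  imports Defs
begin


definition Sset :: "nat \<Rightarrow> nat \<Rightarrow> nat \<Rightarrow> nat \<Rightarrow> (real \<times> real) set" where
  "Sset a b q r = {z. 0 \<le> fst z \<and> fst z \<le> real b \<and> 0 \<le> snd z \<and> snd z \<le> real a \<and>
      snd z \<le> real q + real r * (real b - fst z)}"

lemma convex_Sset: "convex (Sset a b q r)"
proof (rule convexI)
  fix z w :: "real \<times> real" and u v :: real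
  assume hz: "z \<in> Sset a b q r" and hw: "w \<in> Sset a b q r" and hu: "0 \<le> u" "0 \<le> v" "u + v = 1"
  obtain x1 y1 where z: "z = (x1, y1)" by (cases z)
  obtain x2 y2 where w: "w = (x2, y2)" by (cases w)
  have h: "0 \<le> x1" "x1 \<le> real b" "0 \<le> y1" "y1 \<le> real a" "y1 \<le> real q + real r * (real b - x1)"
    "0 \<le> x2" "x2 \<le> real b" "0 \<le> y2" "y2 \<le> real a" "y2 \<le> real q + real r * (real b - x2)"
    "0 \<le> u" "0 \<le> v" "u + v = 1"
    using hz hw hu by (auto simp: Sset_def z w)
  have m: "u * x1 \<le> u * b" "v * x2 \<le> v * b" "u*y1 \<le> u * a" "v * y2 \<le> v * a"
    "u * y1 \<le> u * (real q + real r * (real b - x1))" "v * y2 \<le> v * (real q + real r * (real b - x2))"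
    using h by (simp_all add: mult_left_mono)
  have e1: "u * real b + v * real b = real b" "u * real a + v * real a = real a"
    using h(13) by (metis distrib_right mult_1)+
  have e2: "u * (real q + real r * (real b - x1)) + v * (real q + real r * (real b - x2))
        = (u + v) * real q + real r * ((u + v) * real b - (u * x1 + v * x2))"
    by (simp add: algebra_simps)
  have e3: "u * (real q + real r * (real b - x1)) + v * (real q + real r * (real b - x2))
        = real q + real r * (real b - (u * x1 + v * x2))"
    using e2 h(13) by simp
  have "0 \<le> u * x1 + v * x2 \<and> u * x1 + v * x2 \<le> real b \<and> 0 \<le> u * y1 + v * y2 \<and>
       u * y1 + v * y2 \<le> real a \<and> u * y1 + v * y2 \<le> real q + real r * (real b - (u * x1 + v * x2))"
    using h e1 e3 m by (smt (verit) mult_nonneg_nonneg)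
  then show "u *\<^sub>R z + v *\<^sub>R w \<in> Sset a b q r" by (simp add: Sset_def z w)
qed



lemma cvx_comb: "convex H \<Longrightarrow> A \<in> H \<Longrightarrow> B \<in> H \<Longrightarrow> 0 \<le> u \<Longrightarrow> u \<le> 1 \<Longrightarrow>
   (1 - u) *\<^sub>R A + u *\<^sub>R B \<in> H"
  unfolding convex_def by auto

locale hyp =
  fixes a b q r :: nat and p :: real
  assumes p0: "0 \<le> p" and pb: "p \<le> real b" and qa: "q \<le> a"
    and eq: "real a - real q = real r * (real b - p)"
begin

lemma pent_sub: "pentagon a b p q \<subseteq> Sset a b q r"
  unfolding pentagon_def
proof (rule hull_minimal)
  show "convex (Sset a b q r)" by (rule convex_Sset)
  have "real r * p \<ge> 0" using p0 by simp
  then have "real a \<le> real q + real r * real b" using eq by (simp add: algebra_simps)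
  then show "{(0, 0), (0, real a), (p, real a), (real b, real q), (real b, 0)} \<subseteq> Sset a b q r"
    using p0 pb qa eq by (auto simp: Sset_def algebra_simps)
qed

lemma Sset_sub: assumes z: "z \<in> Sset a b q r" shows "z \<in> pentagon a b p q"
proof -
  let ?H = "pentagon a b p q"
  have cv: "convex ?H" unfolding pentagon_def by (rule convex_convex_hull)
  have pts: "(0,0) \<in> ?H" "(0, real a) \<in> ?H" "(p, real a) \<in> ?H" "(real b, real q) \<in> ?H" "(real b, 0) \<in> ?H"
    unfolding pentagon_def by (simp_all add: hull_inc)
  obtain x y where zxy: "z = (x, y)" by (cases z)
  have h: "0 \<le> x" "x \<le> real b" "0 \<le> y" "y \<le> real a" "y \<le> real q + real r * (real b - x)"
    using z by (auto simp: Sset_def zxy)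
  obtain yt where T: "(x, yt) \<in> ?H" and yyt: "y \<le> yt"
  proof (cases "x \<le> p")
    case True
    have "(x, real a) \<in> ?H"
    proof (cases "p = 0")
      case True
      then show ?thesis using \<open>x \<le> p\<close> h pts by simp
    next
      case False
      then have pp: "p > 0" using p0 by simp
      have "(1 - x/p) *\<^sub>R (0, real a) + (x/p) *\<^sub>R (p, real a) \<in> ?H"
        by (rule cvx_comb[OF cv pts(2) pts(3)]) (use h True pp in auto)
      moreover have "(1 - x/p) *\<^sub>R (0, real a) + (x/p) *\<^sub>R (p, real a) = (x, real a)"
        using pp by (simp add: algebra_simps)
      ultimately show ?thesis by simp
    qed
    then show ?thesis using that h by blast
  next
    case False
    then have bp: "b - p > 0" using h by simp
    define u where "u = (x - p) / (real b - p)"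
    have "(1 - u) *\<^sub>R (p, real a) + u *\<^sub>R (real b, real q) \<in> ?H"
      by (rule cvx_comb[OF cv pts(3) pts(4)]) (use h False bp in \<open>auto simp: u_def\<close>)
    moreover have "(1 - u) *\<^sub>R (p, real a) + u *\<^sub>R (real b, real q) = (x, real q + real r * (real b - x))"
    proof -
      have gen: "\<And>u A B::real. (1 - u) * A + u * B = A + u * (B - A)" by (simp add: algebra_simps)
      have "(1 - u) * p + u * real b = p + u * (real b - p)" by (rule gen)
      also have "u * (real b - p) = x - p" using bp by (simp add: u_def)
      finally have "(1 - u) * p + u * real b = x" by simp
      moreover have "(1 - u) * real a + u * real q = real q + real r * (real b - x)"
      proof -
        have "(1 - u) * real a + u * real q = real a - u * (real a - real q)" using gen[of u "real a" "real q"] by (simp add: algebra_simps)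
        also have "u * (real a - real q) = (x - p) * real r" unfolding eq u_def using bp by simp
        then have "real a - u * (real a - real q) = real a - (x - p) * real r" by simp
        also have "\<dots> = real q + real r * (real b - x)" using eq by (simp add: algebra_simps)
        finally show ?thesis .
      qed
      ultimately show ?thesis by simp
    qed
    ultimately show ?thesis using that h by auto
  qed
  have yt0: "0 \<le> yt" using yyt h by simp
  have B: "(x, 0) \<in> ?H"
  proof (cases "b = 0")
    case True
    then show ?thesis using h pts by simp
  next
    case False
    have "(1 - x/b) *\<^sub>R (0, 0) + (x/b) *\<^sub>R (real b, 0) \<in> ?H"
      by (rule cvx_comb[OF cv pts(1) pts(5)]) (use h False in auto)
    then show ?thesis using False by simp
  qed
  show ?thesis
  proof (cases "yt = 0")
    case True
    then show ?thesis using B h yyt zxy by simp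
  next
    case False
    then have ytp: "yt > 0" using yt0 by simp
    have "(1 - y/yt) *\<^sub>R (x, 0) + (y/yt) *\<^sub>R (x, yt) \<in> ?H"
      by (rule cvx_comb[OF cv B T]) (use h ytp yyt in auto)
    moreover have "(1 - y/yt) *\<^sub>R (x, 0) + (y/yt) *\<^sub>R (x, yt) = z"
      using ytp by (simp add: zxy algebra_simps)
    ultimately show ?thesis by simp
  qed
qed

end


lemma filter_lam_id[simp]: "filter (\<lambda>a. a) xs = filter id xs" by (simp add: id_def)

lemma la_len: "length (left_area_aux x st) = length (filter id st)"
  by (induction x st rule: left_area_aux.induct) auto

lemma la_ge: "y \<in> set (left_area_aux x st) \<Longrightarrow> x \<le> y"
  by (induction x st rule: left_area_aux.induct) force+

lemma la_nth: "i < length (filter id st) \<Longrightarrow>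
   \<exists>k<length st. st ! k \<and> length (filter id (take k st)) = i \<and>
      left_area_aux x st ! i = x + length (filter Not (take k st))"
proof (induction x st arbitrary: i rule: left_area_aux.induct)
  case (1 x)
  then show ?case by simp
next
  case (2 x st)
  show ?case
  proof (cases i)
    case 0
    then show ?thesis by (intro exI[of _ 0]) auto
  next
    case (Suc j)
    then have "j < length (filter id st)" using 2 by simp
    from "2.IH"[OF this] obtain k where "k<length st" "st ! k" "length (filter id (take k st)) = j"
      "left_area_aux x st ! j = x + length (filter Not (take k st))" by blast
    then show ?thesis using Suc by (intro exI[of _ "Suc k"]) auto
  qed
next
  case (3 x st)
  then have "i < length (filter id st)" by simp
  from "3.IH"[OF this] obtain k where "k<length st" "st ! k" "length (filter id (take k st)) = i"
      "left_area_aux (Suc x) st ! i = Suc x + length (filter Not (take k st))" by blast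
  then show ?case by (intro exI[of _ "Suc k"]) auto
qed

lemma la_bound: "k \<le> length st \<Longrightarrow> length (filter id (take k st)) < length (filter id st) \<Longrightarrow>
   x + length (filter Not (take k st)) \<le> left_area_aux x st ! length (filter id (take k st))"
proof (induction x st arbitrary: k rule: left_area_aux.induct)
  case (1 x)
  then show ?case by simp
next
  case (2 x st)
  show ?case
  proof (cases k)
    case 0
    then show ?thesis by simp
  next
    case (Suc j)
    then show ?thesis using 2 by auto
  qed
next
  case (3 x st)
  show ?case
  proof (cases k)
    case 0
    have "length (filter id st) > 0" using 3 0 by simp
    then have "left_area_aux (Suc x) st ! 0 \<in> set (left_area_aux (Suc x) st)"
      by (simp add: la_len)
    then have "Suc x \<le> left_area_aux (Suc x) st ! 0" using la_ge by blast
    then show ?thesis using 0 by simp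
  next
    case (Suc j)
    then show ?thesis using 3 by fastforce
  qed
qed

lemma take_counts: "k \<le> length st \<Longrightarrow> length (filter P (take k st)) \<le> length (filter P st)"
proof -
  assume "k \<le> length st"
  have "st = take k st @ drop k st" by simp
  then have "length (filter P st) = length (filter P (take k st)) + length (filter P (drop k st))"
    by (metis filter_append length_append)
  then show ?thesis by simp
qed

fun mk :: "nat \<Rightarrow> nat list \<Rightarrow> nat \<Rightarrow> bool list" where
  "mk x [] b = replicate (b - x) False"
| "mk x (s # ss) b = replicate (s - x) False @ True # mk s ss b"

lemma la_repl: "left_area_aux x (replicate n False @ st) = left_area_aux (x + n) st"
  by (induction n arbitrary: x) auto

lemma la_repl0: "left_area_aux x (replicate n False) = []"
  by (induction n arbitrary: x) auto

lemma la_mk: "sorted (x # s) \<Longrightarrow> left_area_aux x (mk x s b) = s"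
  by (induction x s b rule: mk.induct) (auto simp: la_repl la_repl0)

lemma cT_mk: "length (filter id (mk x s b)) = length s"
  by (induction x s b rule: mk.induct) auto

lemma cF_mk: "sorted (x # s) \<Longrightarrow> \<forall>y\<in>set s. y \<le> b \<Longrightarrow> x \<le> b \<Longrightarrow>
    length (filter Not (mk x s b)) = b - x"
  by (induction x s b rule: mk.induct) auto



definition pf :: "nat \<Rightarrow> nat \<Rightarrow> real \<Rightarrow> nat \<Rightarrow> nat list \<Rightarrow> bool" where
  "pf a b p r c \<longleftrightarrow> length c = a \<and>
     (\<forall>i<a. sort c ! i \<le> b \<and> real r * real (sort c ! i) \<le> real r * p + real i)"

context hyp begin

lemma vertex_in:
  assumes pfc: "pf a b p r c" and st: "st = mk 0 (sort c) b" and j: "j \<le> length st"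
  shows "path_pt a st j \<in> Sset a b q r"
proof -
  let ?s = "sort c"
  have lc: "length ?s = a" using pfc by (simp add: pf_def)
  have sb: "\<forall>y\<in>set ?s. y \<le> b" using pfc unfolding pf_def by (metis in_set_conv_nth length_sort)
  have srt: "sorted (0 # ?s)" by simp
  have la: "left_area_aux 0 st = ?s" using la_mk[OF srt] st by simp
  have cT: "length (filter id st) = a" using cT_mk st lc by simp
  have cF: "length (filter Not st) = b" using cF_mk[OF srt sb] st by simp
  define X where "X = length (filter Not (take j st))"
  define i where "i = length (filter id (take j st))"
  have Xb: "X \<le> b" using take_counts[OF j, of Not] cF X_def by simp
  have ia: "i \<le> a" using take_counts[OF j, of id] cT i_def by simp
  have pt: "path_pt a st j = (real X, real a - real i)" by (simp add: path_pt_def X_def i_def)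
  have key: "real a - real i \<le> real q + real r * (real b - real X)"
  proof (cases "i < a")
    case True
    have "0 + X \<le> left_area_aux 0 st ! i" using la_bound[OF j, of 0] True cT unfolding X_def i_def by simp
    then have "X \<le> ?s ! i" using la by simp
    moreover have "real r * real (?s ! i) \<le> real r * p + real i" using pfc True by (simp add: pf_def)
    ultimately have "real r * real X \<le> real r * p + real i"
      by (smt (verit) mult_left_mono of_nat_0_le_iff of_nat_mono)
    then show ?thesis using eq by (simp add: algebra_simps)
  next
    case False
    then have "i = a" using ia by simp
    moreover have "real r * (real b - real X) \<ge> 0" using Xb by simp
    ultimately show ?thesis by simp
  qed
  show ?thesis unfolding pt Sset_def using Xb ia key by simp
qed

lemma parking_iff: "parking_fn a b p q c \<longleftrightarrow> pf a b p r c"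
proof
  assume h: "parking_fn a b p q c"
  then obtain st where lp: "lattice_path_in a b (pentagon a b p q) st" and sc: "sort c = left_area st"
    and lc: "length c = a" by (auto simp: parking_fn_def)
  have cT: "length (filter id st) = a" using lp by (simp add: lattice_path_in_def)
  show "pf a b p r c" unfolding pf_def
  proof (intro conjI allI impI)
    show "length c = a" by fact
    fix i assume ia: "i < a"
    obtain k where k: "k < length st" "length (filter id (take k st)) = i"
      "left_area_aux 0 st ! i = 0 + length (filter Not (take k st))"
      using la_nth[of i st 0] ia cT by auto
    have "path_pt a st k \<in> closed_segment (path_pt a st k) (path_pt a st (Suc k))" by simp
    also have "\<dots> \<subseteq> pentagon a b p q" using lp k(1) by (simp add: lattice_path_in_def)
    also have "\<dots> \<subseteq> Sset a b q r" by (rule pent_sub)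
    finally have "path_pt a st k \<in> Sset a b q r" .
    moreover have "path_pt a st k = (real (sort c ! i), real a - real i)"
      using k sc by (simp add: path_pt_def left_area_def)
    ultimately have h1: "real (sort c ! i) \<le> real b"
      and h2: "real a - real i \<le> real q + real r * (real b - real (sort c ! i))"
      by (auto simp: Sset_def)
    show "sort c ! i \<le> b" using h1 by simp
    show "real r * real (sort c ! i) \<le> real r * p + real i"
      using h2 eq by (simp add: algebra_simps)
  qed
next
  assume pfc: "pf a b p r c"
  define st where "st = mk 0 (sort c) b"
  let ?s = "sort c"
  have lc: "length ?s = a" using pfc by (simp add: pf_def)
  have sb: "\<forall>y\<in>set ?s. y \<le> b" using pfc unfolding pf_def by (metis in_set_conv_nth length_sort)
  have srt: "sorted (0 # ?s)" by simp
  have la: "left_area st = ?s" using la_mk[OF srt] st_def by (simp add: left_area_def)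
  have cT: "length (filter id st) = a" using cT_mk st_def lc by simp
  have cF: "length (filter Not st) = b" using cF_mk[OF srt sb] st_def by simp
  have cv: "convex (pentagon a b p q)" unfolding pentagon_def by (rule convex_convex_hull)
  have "lattice_path_in a b (pentagon a b p q) st"
    unfolding lattice_path_in_def
  proof (intro conjI allI impI)
    fix k assume k: "k < length st"
    show "closed_segment (path_pt a st k) (path_pt a st (Suc k)) \<subseteq> pentagon a b p q"
      by (rule closed_segment_subset[OF _ _ cv]; rule Sset_sub; rule vertex_in[OF pfc st_def])
        (use k in auto)
  qed (use cT cF in auto)
  then show "parking_fn a b p q c" using la pfc by (auto simp: parking_fn_def pf_def)
qed

end


lemma fin_sub: "finite A \<Longrightarrow> finite {c. length c = n \<and> set c \<subseteq> A \<and> P c}"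
  by (rule finite_subset[OF _ finite_lists_length_eq[of A n]]) auto

lemma card_cons:
  assumes A: "finite A"
  shows "card {c. length c = Suc n \<and> set c \<subseteq> A \<and> P c} =
     (\<Sum>x\<in>A. card {c. length c = n \<and> set c \<subseteq> A \<and> P (x # c)})"
proof -
  have "{c. length c = Suc n \<and> set c \<subseteq> A \<and> P c} =
     (\<Union>x\<in>A. (#) x ` {c. length c = n \<and> set c \<subseteq> A \<and> P (x # c)})"
    by (auto simp: length_Suc_conv)
  moreover have "card (\<Union>x\<in>A. (#) x ` {c. length c = n \<and> set c \<subseteq> A \<and> P (x # c)}) =
     (\<Sum>x\<in>A. card ((#) x ` {c. length c = n \<and> set c \<subseteq> A \<and> P (x # c)}))"
    by (rule card_UN_disjoint) (auto simp: A fin_sub)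
  ultimately have "card {c. length c = Suc n \<and> set c \<subseteq> A \<and> P c} =
     (\<Sum>x\<in>A. card ((#) x ` {c. length c = n \<and> set c \<subseteq> A \<and> P (x # c)}))" by simp
  also have "\<dots> = (\<Sum>x\<in>A. card {c. length c = n \<and> set c \<subseteq> A \<and> P (x # c)})"
    by (intro sum.cong refl card_image) (simp add: inj_on_def)
  finally show ?thesis .
qed

lemma pascal_sum:
  fixes y :: nat and g :: "nat \<Rightarrow> nat"
  shows "(\<Sum>t\<le>Suc a. (Suc a choose t) * y ^ (Suc a - t) * g t) =
    y * (\<Sum>t\<le>a. (a choose t) * y ^ (a - t) * g t) + (\<Sum>t\<le>a. (a choose t) * y ^ (a - t) * g (Suc t))"
proof -
  have s1: "(\<Sum>t\<le>Suc a. (Suc a choose t) * y ^ (Suc a - t) * g t) =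
      y ^ Suc a * g 0 + (\<Sum>t\<le>a. (Suc a choose Suc t) * y ^ (a - t) * g (Suc t))"
    by (subst sum.atMost_Suc_shift) simp
  have s2: "(\<Sum>t\<le>a. (Suc a choose Suc t) * y ^ (a - t) * g (Suc t)) =
      (\<Sum>t\<le>a. (a choose t) * y ^ (a - t) * g (Suc t)) + (\<Sum>t\<le>a. (a choose Suc t) * y ^ (a - t) * g (Suc t))"
    by (simp add: sum.distrib algebra_simps)
  have s3: "(\<Sum>t\<le>Suc a. (a choose t) * y ^ (Suc a - t) * g t) =
      y ^ Suc a * g 0 + (\<Sum>t\<le>a. (a choose Suc t) * y ^ (a - t) * g (Suc t))"
    by (subst sum.atMost_Suc_shift) simp
  have s4: "(\<Sum>t\<le>Suc a. (a choose t) * y ^ (Suc a - t) * g t) = (\<Sum>t\<le>a. (a choose t) * y ^ (Suc a - t) * g t)"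
    by simp
  have s5: "(\<Sum>t\<le>a. (a choose t) * y ^ (Suc a - t) * g t) = y * (\<Sum>t\<le>a. (a choose t) * y ^ (a - t) * g t)"
    by (simp add: sum_distrib_left Suc_diff_le algebra_simps)
  show ?thesis using s1 s2 s3 s4 s5 by simp
qed

lemma split_count:
  assumes fB: "f \<le> B"
  shows "card {c. length c = a \<and> set c \<subseteq> {..B} \<and> R (filter (\<lambda>x. f < x) c)} =
    (\<Sum>t\<le>a. (a choose t) * (f + 1) ^ (a - t) * card {e. length e = t \<and> set e \<subseteq> {f<..B} \<and> R e})"
  using fB
proof (induction a arbitrary: R)
  case 0
  have "{c::nat list. length c = 0 \<and> set c \<subseteq> {..B} \<and> R (filter (\<lambda>x. f < x) c)} =
      {e. length e = 0 \<and> set e \<subseteq> {f<..B} \<and> R e}" by auto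
  then show ?case by simp
next
  case (Suc a)
  let ?M = "\<lambda>R t. card {e. length e = t \<and> set e \<subseteq> {f<..B} \<and> R e}"
  have "card {c. length c = Suc a \<and> set c \<subseteq> {..B} \<and> R (filter (\<lambda>x. f < x) c)} =
      (\<Sum>x\<le>B. card {c. length c = a \<and> set c \<subseteq> {..B} \<and> R (filter (\<lambda>x. f < x) (x # c))})"
    by (rule card_cons) simp
  also have "\<dots> = (\<Sum>x\<in>{..f}. card {c. length c = a \<and> set c \<subseteq> {..B} \<and> R (filter (\<lambda>x. f < x) (x # c))})
      + (\<Sum>x\<in>{f<..B}. card {c. length c = a \<and> set c \<subseteq> {..B} \<and> R (filter (\<lambda>x. f < x) (x # c))})"
  proof -
    have "{..B} = {..f} \<union> {f<..B}" using Suc.prems by auto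
    then have "\<And>F. (\<Sum>x\<le>B. F x) = (\<Sum>x\<le>f. F x) + (\<Sum>x\<in>{f<..B}. F x)"
      by (simp only:) (rule sum.union_disjoint, auto)
    then show ?thesis by (rule meta_spec)
  qed
  also have "(\<Sum>x\<in>{..f}. card {c. length c = a \<and> set c \<subseteq> {..B} \<and> R (filter (\<lambda>x. f < x) (x # c))})
     = (f + 1) * (\<Sum>t\<le>a. (a choose t) * (f + 1) ^ (a - t) * ?M R t)"
    using Suc.IH[OF Suc.prems, of R] by simp
  also have "(\<Sum>x\<in>{f<..B}. card {c. length c = a \<and> set c \<subseteq> {..B} \<and> R (filter (\<lambda>x. f < x) (x # c))})
     = (\<Sum>x\<in>{f<..B}. (\<Sum>t\<le>a. (a choose t) * (f + 1) ^ (a - t) * ?M (\<lambda>e. R (x # e)) t))"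
  proof (intro sum.cong refl)
    fix x assume "x \<in> {f<..B}"
    then have "f < x" by simp
    then show "card {c. length c = a \<and> set c \<subseteq> {..B} \<and> R (filter (\<lambda>x. f < x) (x # c))} =
       (\<Sum>t\<le>a. (a choose t) * (f + 1) ^ (a - t) * ?M (\<lambda>e. R (x # e)) t)"
      using Suc.IH[OF Suc.prems, of "\<lambda>e. R (x # e)"] by simp
  qed
  also have "\<dots> = (\<Sum>t\<le>a. (a choose t) * (f + 1) ^ (a - t) * (\<Sum>x\<in>{f<..B}. ?M (\<lambda>e. R (x # e)) t))"
    by (subst sum.swap) (simp add: sum_distrib_left)
  also have "\<dots> = (\<Sum>t\<le>a. (a choose t) * (f + 1) ^ (a - t) * ?M R (Suc t))"
  proof (intro sum.cong refl)
    fix t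
    have "?M R (Suc t) = (\<Sum>x\<in>{f<..B}. ?M (\<lambda>e. R (x # e)) t)"
      by (rule card_cons) simp
    then show "(a choose t) * (f + 1) ^ (a - t) * (\<Sum>x\<in>{f<..B}. ?M (\<lambda>e. R (x # e)) t) =
        (a choose t) * (f + 1) ^ (a - t) * ?M R (Suc t)" by simp
  qed
  finally show ?case using pascal_sum[where y="f+1" and a=a and g="?M R"] by simp
qed



lemma pf_set: assumes "pf a b p r c" shows "set c \<subseteq> {..b}"
proof
  fix x assume "x \<in> set c"
  then have "x \<in> set (sort c)" by simp
  then obtain i where "i < length (sort c)" "sort c ! i = x" by (metis in_set_conv_nth)
  then show "x \<in> {..b}" using assms by (auto simp: pf_def)
qed

lemma pf_full: assumes "real b \<le> p" shows "card {c. pf a b p r c} = (b + 1) ^ a"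
proof -
  have "{c. pf a b p r c} = {c. set c \<subseteq> {..b} \<and> length c = a}"
  proof (intro set_eqI iffI)
    fix c assume "c \<in> {c. pf a b p r c}"
    then have pc: "pf a b p r c" by simp
    show "c \<in> {c. set c \<subseteq> {..b} \<and> length c = a}" using pf_set[OF pc] pc by (simp add: pf_def)
  next
    fix c assume c: "c \<in> {c. set c \<subseteq> {..b} \<and> length c = a}"
    have "pf a b p r c" unfolding pf_def
    proof (intro conjI allI impI)
      show "length c = a" using c by simp
      fix i assume i: "i < a"
      then have "i < length (sort c)" using c by simp
      then have "sort c ! i \<in> set (sort c)" by (rule nth_mem)
      then have "sort c ! i \<in> set c" by simp
      then show sb: "sort c ! i \<le> b" using c by blast
      have "real r * real (sort c ! i) \<le> real r * real b" using sb by (simp add: mult_left_mono)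
      also have "\<dots> \<le> real r * p" using assms by (simp add: mult_left_mono)
      finally show "real r * real (sort c ! i) \<le> real r * p + real i" by simp
    qed
    then show "c \<in> {c. pf a b p r c}" by simp
  qed
  moreover have "card {c. set c \<subseteq> {..b} \<and> length c = a} = (b + 1) ^ a"
    using card_lists_length_eq[of "{..b}" a] by simp
  ultimately show ?thesis by simp
qed

lemma pf_empty: assumes "p < 0" "r \<ge> 1" "a \<ge> 1" shows "card {c. pf a b p r c} = 0"
proof -
  have "\<not> pf a b p r c" for c
  proof
    assume "pf a b p r c"
    then have "\<forall>i<a. real r * real (sort c ! i) \<le> real r * p + real i" by (simp add: pf_def)
    moreover have "0 < a" using assms(3) by simp
    ultimately have "real r * real (sort c ! 0) \<le> real r * p + real 0" by blast
    then have "real r * real (sort c ! 0) \<le> real r * p" by simp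
    moreover have "real r * p < 0" using assms by (simp add: mult_pos_neg)
    moreover have "real r * real (sort c ! 0) \<ge> 0" by simp
    ultimately show False by simp
  qed
  then show ?thesis by simp
qed

lemma card_shift:
  assumes fB: "f < B"
  shows "card {e. length e = t \<and> set e \<subseteq> {f<..B} \<and> Q (map (\<lambda>x. x - Suc f) e)} =
         card {d. length d = t \<and> set d \<subseteq> {..B - Suc f} \<and> Q d}"
proof -
  let ?g = "map (\<lambda>x. x - Suc f)"
  let ?S = "{e. length e = t \<and> set e \<subseteq> {f<..B} \<and> Q (map (\<lambda>x. x - Suc f) e)}"
  have inj: "inj_on ?g ?S"
  proof (rule inj_onI)
    fix x y assume "x \<in> ?S" "y \<in> ?S" "?g x = ?g y"
    moreover have "inj_on (\<lambda>x. x - Suc f) {f<..}" by (auto simp: inj_on_def)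
    moreover have "set x \<union> set y \<subseteq> {f<..}" using \<open>x \<in> ?S\<close> \<open>y \<in> ?S\<close> by auto
    ultimately have "?g x = ?g y" "inj_on (\<lambda>x. x - Suc f) (set x \<union> set y)"
      using inj_on_subset by blast+
    then show "x = y" using map_inj_on by blast
  qed
  have img: "?g ` ?S = {d. length d = t \<and> set d \<subseteq> {..B - Suc f} \<and> Q d}"
  proof (intro set_eqI iffI)
    fix d assume "d \<in> ?g ` ?S"
    then show "d \<in> {d. length d = t \<and> set d \<subseteq> {..B - Suc f} \<and> Q d}"
      by (force simp: subset_iff diff_le_mono)
  next
    fix d assume d: "d \<in> {d. length d = t \<and> set d \<subseteq> {..B - Suc f} \<and> Q d}"
    let ?e = "map (\<lambda>x. x + Suc f) d"
    have ge: "?g ?e = d" by (induction d) auto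
    have eS: "?e \<in> ?S" using d fB ge by auto
    show "d \<in> ?g ` ?S" by (rule rev_image_eqI[OF eS]) (rule ge[symmetric])
  qed
  show ?thesis using card_image[OF inj] img by simp
qed

lemma all_less_add: "(\<forall>i<(m::nat) + n. P i) \<longleftrightarrow> (\<forall>i<m. P i) \<and> (\<forall>j<n. P (m + j))"
proof
  assume "\<forall>i<m+n. P i" then show "(\<forall>i<m. P i) \<and> (\<forall>j<n. P (m+j))" by auto
next
  assume h: "(\<forall>i<m. P i) \<and> (\<forall>j<n. P (m + j))"
  show "\<forall>i<m+n. P i"
  proof (intro allI impI)
    fix i assume i: "i < m + n"
    show "P i"
    proof (cases "i < m")
      case True
      then show ?thesis using h by blast
    next
      case False
      then have "i - m < n" "m + (i - m) = i" using i by auto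
      then show ?thesis using h by metis
    qed
  qed
qed



lemma sorted_minus: "sorted (xs::nat list) \<Longrightarrow> sorted (map (\<lambda>x. x - k) xs)"
  by (induction xs) (auto simp: diff_le_mono)

lemma pf_split:
  fixes f :: nat
  assumes r: "r \<ge> 1" and fp: "real f \<le> p" and fb: "f < b" and lc: "length c = a"
  defines "e \<equiv> filter (\<lambda>x. f < x) c"
  shows "pf a b p r c \<longleftrightarrow> set c \<subseteq> {..b} \<and>
     pf (length e) (b - Suc f) (p - real (Suc f) + (real a - real (length e)) / real r) r
        (map (\<lambda>x. x - Suc f) e)"
proof -
  define t where "t = length e"
  define L where "L = sort (filter (\<lambda>x. \<not> f < x) c)"
  define H where "H = sort e"
  define d where "d = map (\<lambda>x. x - Suc f) e"
  have lL: "length L + t = a"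
    using sum_length_filter_compl[of "\<lambda>x. f < x" c] lc by (simp add: L_def t_def e_def)
  have sc: "sort c = L @ H"
  proof (rule properties_for_sort)
    show "mset (L @ H) = mset c"
      unfolding L_def H_def e_def by simp
    show "sorted (L @ H)"
      unfolding L_def H_def e_def by (auto simp: sorted_append)
  qed
  have setH: "set H = set e" by (simp add: H_def)
  have lH: "length H = t" by (simp add: H_def t_def)
  have sd: "sort d = map (\<lambda>x. x - Suc f) H"
  proof (rule properties_for_sort)
    show "mset (map (\<lambda>x. x - Suc f) H) = mset d" by (simp add: H_def d_def)
    show "sorted (map (\<lambda>x. x - Suc f) H)"
      unfolding H_def by (rule sorted_minus[OF sorted_sort])
  qed
  have Hj: "H ! j = sort d ! j + Suc f" if "j < t" for j
  proof -
    have "H ! j \<in> set e" using that lH setH by (metis nth_mem)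
    then have "f < H ! j" by (simp add: e_def)
    then show ?thesis using sd that lH by simp
  qed
  have Li: "L ! i \<le> f" if "i < length L" for i
  proof -
    have "L ! i \<in> set L" using that by simp
    then show ?thesis by (simp add: L_def)
  qed
  define C where "C = (\<lambda>i. sort c ! i \<le> b \<and> real r * real (sort c ! i) \<le> real r * p + real i)"
  have rpos: "real r > 0" using r by simp
  have lowok: "C i" if "i < length L" for i
  proof -
    have s: "sort c ! i = L ! i" using sc that by (simp add: nth_append)
    have "sort c ! i \<le> f" using Li[OF that] s by simp
    moreover have "real r * real (sort c ! i) \<le> real r * real f"
      using \<open>sort c ! i \<le> f\<close> by (simp add: mult_left_mono)
    moreover have "real r * real f \<le> real r * p" using fp by (simp add: mult_left_mono)
    ultimately show ?thesis unfolding C_def using fb by simp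
  qed
  have highiff: "C (length L + j) \<longleftrightarrow> (sort d ! j \<le> b - Suc f \<and>
     real r * real (sort d ! j) \<le> real r * (p - real (Suc f) + (real a - real t) / real r) + real j)"
    if j: "j < t" for j
  proof -
    have s: "sort c ! (length L + j) = sort d ! j + Suc f" using sc Hj[OF j] by (simp add: nth_append)
    have e1: "real r * (p - real (Suc f) + (real a - real t) / real r) + real j =
        real r * p - real r * real (Suc f) + (real a - real t) + real j"
    proof -
      have d1: "real r * ((real a - real t) / real r) = real a - real t" using rpos by simp
      show ?thesis by (simp only: distrib_left right_diff_distrib d1)
    qed
    have e2: "real (length L + j) = real a - real t + real j" using lL by simp
    show ?thesis unfolding C_def s e1 e2 using fb by (auto simp: algebra_simps)
  qed
  have "pf a b p r c \<longleftrightarrow> (\<forall>i<length L + t. C i)"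
    unfolding pf_def C_def using lc lL by simp
  also have "\<dots> \<longleftrightarrow> (\<forall>j<t. C (length L + j))"
    unfolding all_less_add using lowok by auto
  also have "\<dots> \<longleftrightarrow> pf t (b - Suc f) (p - real (Suc f) + (real a - real t) / real r) r d"
    unfolding pf_def using highiff by (simp add: d_def t_def)
  finally have main: "pf a b p r c \<longleftrightarrow> pf t (b - Suc f) (p - real (Suc f) + (real a - real t) / real r) r d" .
  show ?thesis using main pf_set[of a b p r c] unfolding t_def d_def by blast
qed



declare G.simps[simp del]

lemma sum_split3:
  fixes h :: "nat \<Rightarrow> nat"
  assumes "q \<le> m" "m \<le> a"
  shows "(\<Sum>t\<le>a. h t) = (\<Sum>t=0..q. h t) + (\<Sum>t=q+1..m. h t) + (\<Sum>t=m+1..a. h t)"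
proof -
  have "{..a} = ({0..q} \<union> {q+1..m}) \<union> {m+1..a}" using assms by auto
  then have "(\<Sum>t\<le>a. h t) = (\<Sum>t\<in>({0..q} \<union> {q+1..m}) \<union> {m+1..a}. h t)" by simp
  also have "\<dots> = (\<Sum>t\<in>{0..q} \<union> {q+1..m}. h t) + (\<Sum>t=m+1..a. h t)"
    by (rule sum.union_disjoint) (use assms in auto)
  also have "(\<Sum>t\<in>{0..q} \<union> {q+1..m}. h t) = (\<Sum>t=0..q. h t) + (\<Sum>t=q+1..m. h t)"
    by (rule sum.union_disjoint) auto
  finally show ?thesis .
qed

lemma main_pf:
  assumes r: "r \<ge> 1"
  shows "\<forall>a p q. 0 \<le> p \<longrightarrow> p \<le> real b \<longrightarrow> q \<le> a \<longrightarrow>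
     real a - real q = real r * (real b - p) \<longrightarrow> \<not> (a = 0 \<and> b = 0) \<longrightarrow>
     card {c. pf a b p r c} = G a b p r q"
proof (induction b rule: less_induct)
  case (less b)
  show ?case
  proof (intro allI impI)
    fix a q :: nat and p :: real
    assume p0: "0 \<le> p" and pb: "p \<le> real b" and qa: "q \<le> a"
      and eq: "real a - real q = real r * (real b - p)" and nz: "\<not> (a = 0 \<and> b = 0)"
    have rpos: "real r > 0" using r by simp
    show "card {c. pf a b p r c} = G a b p r q"
    proof (cases "p = real b")
      case True
      then show ?thesis unfolding G.simps[of a b p r q] using pf_full[of b p a r] by simp
    next
      case False
      then have plb: "p < real b" using pb by simp
      define f where "f = nat \<lfloor>p\<rfloor>"
      have rf: "real f = real_of_int \<lfloor>p\<rfloor>" using p0 unfolding f_def by simp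
      have fp: "real f \<le> p" using rf floor_correct[of p] by linarith
      have pf1: "p < real f + 1" using rf floor_correct[of p] by simp
      have fb: "f < b" using fp plb by linarith
      define b' where "b' = b - Suc f"
      have rb': "real b' = real b - real f - 1" using fb unfolding b'_def by simp
      define p' where "p' = (\<lambda>t::nat. p - real (Suc f) + (real a - real t) / real r)"
      have p'eq: "p' t = real b' - (real t - real q) / real r" for t
      proof -
        have "real a / real r = real q / real r + (real b - p)"
          using eq rpos by (simp add: field_simps)
        then show ?thesis unfolding p'_def rb' using rpos by (simp add: diff_divide_distrib)
      qed
      define K where "K = (\<lambda>t. card {d. pf t b' (p' t) r d})"
      have card_eq: "card {c. pf a b p r c} = (\<Sum>t\<le>a. (a choose t) * (f + 1) ^ (a - t) * K t)"
      proof -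
        let ?R = "\<lambda>e. pf (length e) b' (p' (length e)) r (map (\<lambda>x. x - Suc f) e)"
        have "{c. pf a b p r c} = {c. length c = a \<and> set c \<subseteq> {..b} \<and> ?R (filter (\<lambda>x. f < x) c)}"
        proof (intro set_eqI iffI)
          fix c assume "c \<in> {c. pf a b p r c}"
          then have "pf a b p r c" by simp
          then have "length c = a" by (simp add: pf_def)
          then show "c \<in> {c. length c = a \<and> set c \<subseteq> {..b} \<and> ?R (filter (\<lambda>x. f < x) c)}"
            using pf_split[OF r fp fb] \<open>pf a b p r c\<close> unfolding p'_def b'_def by auto
        next
          fix c assume "c \<in> {c. length c = a \<and> set c \<subseteq> {..b} \<and> ?R (filter (\<lambda>x. f < x) c)}"
          then show "c \<in> {c. pf a b p r c}"
            using pf_split[OF r fp fb] unfolding p'_def b'_def by auto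
        qed
        then have "card {c. pf a b p r c} =
            (\<Sum>t\<le>a. (a choose t) * (f + 1) ^ (a - t) * card {e. length e = t \<and> set e \<subseteq> {f<..b} \<and> ?R e})"
          using split_count[of f b a ?R] fb by simp
        also have "\<dots> = (\<Sum>t\<le>a. (a choose t) * (f + 1) ^ (a - t) * K t)"
        proof (intro sum.cong refl)
          fix t
          have "{e. length e = t \<and> set e \<subseteq> {f<..b} \<and> ?R e} =
                {e. length e = t \<and> set e \<subseteq> {f<..b} \<and> pf t b' (p' t) r (map (\<lambda>x. x - Suc f) e)}"
            by auto
          also have "card \<dots> = card {d. length d = t \<and> set d \<subseteq> {..b - Suc f} \<and> pf t b' (p' t) r d}"
            by (rule card_shift[OF fb])
          also have "{d. length d = t \<and> set d \<subseteq> {..b - Suc f} \<and> pf t b' (p' t) r d} = {d. pf t b' (p' t) r d}"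
            using pf_set[of t b' _ r] unfolding b'_def by (auto simp: pf_def)
          finally show "(a choose t) * (f + 1) ^ (a - t) * card {e. length e = t \<and> set e \<subseteq> {f<..b} \<and> ?R e} =
              (a choose t) * (f + 1) ^ (a - t) * K t" unfolding K_def by simp
        qed
        finally show ?thesis .
      qed
      have K1: "K t = (b - f) ^ t" if "t \<le> q" for t
      proof -
        have "real b' \<le> p' t" unfolding p'eq using that rpos by (simp add: divide_nonpos_pos)
        then have "K t = (b' + 1) ^ t" unfolding K_def by (rule pf_full)
        then show ?thesis using fb unfolding b'_def by (simp add: Suc_diff_Suc)
      qed
      have bound: "real r * real b' < real a - real q"
      proof -
        have "real b' < real b - p" using rb' pf1 by simp
        then show ?thesis using eq rpos by simp
      qed
      have K2: "K t = 0" if "q + b' * r < t" for t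
      proof -
        have "real (q + b' * r) < real t" using that by (simp only: of_nat_less_iff)
        then have "real r * real b' < real t - real q" by (simp add: algebra_simps)
        then have "real b' < (real t - real q) / real r" using rpos by (simp add: field_simps)
        then have "p' t < 0" unfolding p'eq by simp
        then show ?thesis unfolding K_def using pf_empty[of "p' t" r t b'] r that by simp
      qed
      have K3: "K t = G t b' (real (b - f) - (real t - real q) / real r - 1) r q"
        if "q < t" "t \<le> q + b' * r" for t
      proof -
        have arg: "real (b - f) - (real t - real q) / real r - 1 = p' t"
          unfolding p'eq rb' using fb by simp
        have lt: "b' < b" using fb unfolding b'_def by simp
        have h1: "0 \<le> p' t"
        proof -
          have "real t \<le> real (q + b' * r)" using that by (simp only: of_nat_le_iff)
          then have "real t - real q \<le> real b' * real r" by (simp add: algebra_simps)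
          then have "(real t - real q) / real r \<le> real b'" using rpos by (simp add: field_simps)
          then show ?thesis unfolding p'eq by simp
        qed
        have h2: "p' t \<le> real b'" unfolding p'eq using that rpos by simp
        have h3: "real t - real q = real r * (real b' - p' t)" unfolding p'eq using rpos by simp
        have "card {c. pf t b' (p' t) r c} = G t b' (p' t) r q"
          using less.IH[OF lt] h1 h2 h3 that by simp
        then show ?thesis unfolding K_def arg .
      qed
      have "real (q + b' * r) < real a" using bound by (simp add: algebra_simps)
      then have qa': "q + b' * r < a" by (simp only: of_nat_less_iff)
      show ?thesis
      proof (cases "a - q \<le> r")
        case True
        have b'0: "b' = 0"
        proof (rule ccontr)
          assume "b' \<noteq> 0"
          then have "r \<le> b' * r" by simp
          then show False using qa' True by linarith
        qed
        have "card {c. pf a b p r c} = (\<Sum>t\<le>a. (a choose t) * (f + 1) ^ (a - t) * K t)" by (rule card_eq)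
        also have "\<dots> = (\<Sum>t=0..q. (a choose t) * (f + 1) ^ (a - t) * K t) + 
            (\<Sum>t=q+1..q. (a choose t) * (f + 1) ^ (a - t) * K t) +
            (\<Sum>t=q+1..a. (a choose t) * (f + 1) ^ (a - t) * K t)"
          by (rule sum_split3) (use qa in auto)
        also have "\<dots> = (\<Sum>t=0..q. (a choose t) * b ^ (a - t))"
        proof -
          have "(\<Sum>t=q+1..a. (a choose t) * (f + 1) ^ (a - t) * K t) = 0"
            using K2 b'0 by simp
          moreover have "(\<Sum>t=0..q. (a choose t) * (f + 1) ^ (a - t) * K t) =
              (\<Sum>t=0..q. (a choose t) * b ^ (a - t))"
          proof (intro sum.cong refl)
            fix t assume "t \<in> {0..q}"
            moreover have "Suc f = b" "b - f = 1" using b'0 fb unfolding b'_def by simp_all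
            ultimately show "(a choose t) * (f + 1) ^ (a - t) * K t = (a choose t) * b ^ (a - t)"
              using K1 by simp
          qed
          ultimately show ?thesis by simp
        qed
        also have "\<dots> = (\<Sum>w=0..q. b ^ (a - q + w) * (a choose (q - w)))"
          by (subst sum.atLeastAtMost_rev) (use qa in \<open>intro sum.cong refl, auto\<close>)
        also have "\<dots> = G a b p r q" using False True by (simp add: G.simps[of a b p r q])
        finally show ?thesis .
      next
        case False2: False
        have "card {c. pf a b p r c} = (\<Sum>t\<le>a. (a choose t) * (f + 1) ^ (a - t) * K t)" by (rule card_eq)
        also have "\<dots> = (\<Sum>t=0..q. (a choose t) * (f + 1) ^ (a - t) * K t) + 
            (\<Sum>t=q+1..q + b' * r. (a choose t) * (f + 1) ^ (a - t) * K t) +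
            (\<Sum>t=q + b' * r+1..a. (a choose t) * (f + 1) ^ (a - t) * K t)"
          by (rule sum_split3) (use qa' in auto)
        also have "\<dots> = (\<Sum>w = 0..q. (f + 1) ^ (a - w) * (b - f) ^ w * (a choose w)) +
            (\<Sum>t = q + 1..q + b' * r. (f + 1) ^ (a - t) * (a choose t) *
              G t b' (real (b - f) - (real t - real q) / real r - 1) r q)"
        proof -
          have "(\<Sum>t=q + b' * r+1..a. (a choose t) * (f + 1) ^ (a - t) * K t) = 0"
            using K2 by simp
          moreover have "(\<Sum>t=0..q. (a choose t) * (f + 1) ^ (a - t) * K t) =
              (\<Sum>w = 0..q. (f + 1) ^ (a - w) * (b - f) ^ w * (a choose w))"
            using K1 by (intro sum.cong refl) simp
          moreover have "(\<Sum>t=q+1..q + b' * r. (a choose t) * (f + 1) ^ (a - t) * K t) =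
              (\<Sum>t = q + 1..q + b' * r. (f + 1) ^ (a - t) * (a choose t) *
              G t b' (real (b - f) - (real t - real q) / real r - 1) r q)"
            using K3 by (intro sum.cong refl) simp
          ultimately show ?thesis by simp
        qed
        also have "\<dots> = G a b p r q"
        proof -
          have b0: "0 < b" using fb by simp
          show ?thesis
            by (simp add: G.simps[of a b p r q] False False2 f_def[symmetric] b'_def b0)
        qed
        finally show ?thesis .
      qed
    qed
  qed
qed


theorem mainTheorem2:
  fixes a b q r :: nat and p :: real
  assumes "r \<ge> 1"
    and "0 \<le> p" and "p \<le> real b"
    and "q \<le> a"
    and "real a - real q = real r * (real b - p)"
    and "\<not> (a = 0 \<and> b = 0)"
  shows "card {c :: nat list. parking_fn a b p q c} = G a b p r q"
proof -
  interpret hyp a b q r p using assms by unfold_locales auto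
  have "{c. parking_fn a b p q c} = {c. pf a b p r c}" using parking_iff by auto
  moreover have "card {c. pf a b p r c} = G a b p r q"
    using main_pf[OF assms(1), of b] assms(2-6) by blast
  ultimately show ?thesis by simp
qed

end
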